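(* Let $a,b,c$ be pairwise coprime positive integers and let $G$ be an $(a,b,c)$-group with $(a,b,c)$-generators $x,y$, i.e. $G$ is a finite group generated by $x,y$ with $\operatorname{ord}(x)=a$, $\operatorname{ord}(y)=b$ and $\operatorname{ord}(xy)=c$. Then the Veech group of the regular origami $(G,y,x)$ is a totally non-congruence group.
   Context: A regular origami $(G,u,v)$ is given by a finite group $G$ generated by two elements $u,v$: it is the translation surface obtained from unit squares indexed by the elements $g\in G$, where the right edge of square $g$ is glued to the left edge of square $gu$ and the top edge of square $g$ is glued to the bottom edge of square $gv$. Two regular origamis $(G,u,v)$, $(G',u',v')$ are identified if there is a group isomorphism $G\to G'$ with $u\mapsto u'$, $v\mapsto v'$. The group $\mathrm{SL}(2,\mathbb{Z})$ acts on regular origamis via $S\cdot(G,u,v)=(G,v^{-1},u)$ and $T\cdot(G,u,v)=(G,u,vu^{-1})$, where $S=\begin{pmatrix}0&-1\\1&0\end{pmatrix}$, $T=\begin{pmatrix}1&1\\0&1\end{pmatrix}$. The Veech group of a regular origami is its stabilizer under this action, a finite index subgroup of $\mathrm{SL}(2,\mathbb{Z})$. A finite index subgroup $\Gamma\le\mathrm{SL}(2,\mathbb{Z})$ is a totally non-congruence group if for every integer $n\ge1$ the reduction map $\mathrm{SL}(2,\mathbb{Z})\to\mathrm{SL}(2,\mathbb{Z}/n\mathbb{Z})$ restricted to $\Gamma$ is surjective. *)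

theory Defs
  imports "HOL-Algebra.Algebra"
begin

text \<open>Integer 2x2 matrices: (a,b,c,d) stands for the matrix with rows (a b) and (c d).\<close>
type_synonym imat2 = "int \<times> int \<times> int \<times> int"

definition imat_mult :: "imat2 \<Rightarrow> imat2 \<Rightarrow> imat2" where
  "imat_mult M N = (case M of (a,b,c,d) \<Rightarrow> case N of (e,f,g,h) \<Rightarrow>
      (a*e + b*g, a*f + b*h, c*e + d*g, c*f + d*h))"

definition imat_det :: "imat2 \<Rightarrow> int" where
  "imat_det M = (case M of (p,q,r,s) \<Rightarrow> p*s - q*r)"

definition imat_id :: imat2 where "imat_id = (1,0,0,1)"

datatype gen = GS | GT | GSinv | GTinv

definition gen_mat :: "gen \<Rightarrow> imat2" where
  "gen_mat g = (case g of GS \<Rightarrow> (0,-1,1,0) | GT \<Rightarrow> (1,1,0,1)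
                 | GSinv \<Rightarrow> (0,1,-1,0) | GTinv \<Rightarrow> (1,-1,0,1))"

fun word_mat :: "gen list \<Rightarrow> imat2" where
  "word_mat [] = imat_id"
| "word_mat (g # w) = imat_mult (gen_mat g) (word_mat w)"

definition gen_act :: "('a, 'b) monoid_scheme \<Rightarrow> gen \<Rightarrow> 'a \<times> 'a \<Rightarrow> 'a \<times> 'a" where
  "gen_act G g p = (case p of (u, v) \<Rightarrow> (case g of
       GS \<Rightarrow> (inv\<^bsub>G\<^esub> v, u)
     | GT \<Rightarrow> (u, v \<otimes>\<^bsub>G\<^esub> inv\<^bsub>G\<^esub> u)
     | GSinv \<Rightarrow> (v, inv\<^bsub>G\<^esub> u)
     | GTinv \<Rightarrow> (u, v \<otimes>\<^bsub>G\<^esub> u)))"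

fun word_act :: "('a, 'b) monoid_scheme \<Rightarrow> gen list \<Rightarrow> 'a \<times> 'a \<Rightarrow> 'a \<times> 'a" where
  "word_act G [] p = p"
| "word_act G (g # w) p = gen_act G g (word_act G w p)"

text \<open>Regular origamis (G,u,v) and (G,u',v') on the same group are identified
  iff some automorphism of G maps u to u' and v to v'.\<close>
definition origami_equiv :: "('a, 'b) monoid_scheme \<Rightarrow> 'a \<times> 'a \<Rightarrow> 'a \<times> 'a \<Rightarrow> bool" where
  "origami_equiv G p q \<longleftrightarrow> (\<exists>\<phi> \<in> iso G G. \<phi> (fst p) = fst q \<and> \<phi> (snd p) = snd q)"

text \<open>Veech group of the regular origami (G,u,v): the stabilizer of (G,u,v) under the
  SL(2,Z)-action, i.e. all matrices M (given as words in S, T and their inverses)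
  with M.(G,u,v) identified with (G,u,v).\<close>
definition veech_group :: "('a, 'b) monoid_scheme \<Rightarrow> 'a \<Rightarrow> 'a \<Rightarrow> imat2 set" where
  "veech_group G u v = {word_mat w | w. origami_equiv G (word_act G w (u, v)) (u, v)}"

definition imat_cong :: "imat2 \<Rightarrow> imat2 \<Rightarrow> int \<Rightarrow> bool" where
  "imat_cong M N n = (case M of (a,b,c,d) \<Rightarrow> case N of (e,f,g,h) \<Rightarrow>
      a mod n = e mod n \<and> b mod n = f mod n \<and> c mod n = g mod n \<and> d mod n = h mod n)"

text \<open>Totally non-congruence: for every n >= 1 the reduction mod n maps the group onto
  SL(2,Z/nZ), whose elements are represented by integer matrices with determinant
  congruent to 1 modulo n.\<close>
definition totally_noncongruence :: "imat2 set \<Rightarrow> bool" where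
  "totally_noncongruence \<Gamma> \<longleftrightarrow>
     (\<forall>n::int. n \<ge> 1 \<longrightarrow> (\<forall>M. imat_det M mod n = 1 mod n \<longrightarrow> (\<exists>N \<in> \<Gamma>. imat_cong N M n)))"

end

theory Submission imports Defs "HOL-Number_Theory.Cong" begin

lemma imat_mult_assoc: "imat_mult (imat_mult A B) C = imat_mult A (imat_mult B C)"
  by (cases A; cases B; cases C) (simp add: imat_mult_def algebra_simps)

lemma imat_mult_id[simp]: "imat_mult imat_id A = A" "imat_mult A imat_id = A"
  by (cases A; simp add: imat_mult_def imat_id_def)+

definition e12 :: "int \<Rightarrow> imat2" where "e12 t = (1,t,0,1)"
definition e21 :: "int \<Rightarrow> imat2" where "e21 t = (1,0,t,1)"
definition nn :: "int \<Rightarrow> imat2" where "nn t = (1-t,t,-t,1+t)"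

lemma imat_cong_dvd: "imat_cong (a,b,c,d) (e,f,g,h) n \<longleftrightarrow>
   n dvd a - e \<and> n dvd b - f \<and> n dvd c - g \<and> n dvd d - h"
  by (simp add: imat_cong_def mod_eq_dvd_iff)

lemma imat_cong_refl[simp]: "imat_cong M M n"
  by (cases M) (simp add: imat_cong_def)

lemma imat_cong_trans: "imat_cong M N n \<Longrightarrow> imat_cong N K n \<Longrightarrow> imat_cong M K n"
  by (cases M; cases N; cases K) (simp add: imat_cong_def)

lemma imat_cong_mult: "imat_cong A1 A2 n \<Longrightarrow> imat_cong B1 B2 n \<Longrightarrow>
   imat_cong (imat_mult A1 B1) (imat_mult A2 B2) n"
  by (cases A1; cases B1; cases A2; cases B2)
     (auto simp: imat_cong_def imat_mult_def intro!: mod_add_cong mod_mult_cong)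

lemma imat_cong_crt:
  assumes "coprime q (m::int)" "imat_cong P R q" "imat_cong P R m"
  shows "imat_cong P R (q*m)"
  using assms by (cases P; cases R) (auto simp: imat_cong_dvd intro: divides_mult)

lemma cong_e12: "n dvd s - t \<Longrightarrow> imat_cong (e12 s) (e12 t) n"
  by (simp add: e12_def imat_cong_dvd)
lemma cong_e21: "n dvd s - t \<Longrightarrow> imat_cong (e21 s) (e21 t) n"
  by (simp add: e21_def imat_cong_dvd)
lemma cong_nn: "n dvd s - t \<Longrightarrow> imat_cong (nn s) (nn t) n"
proof -
  assume h: "n dvd s - t"
  have "n dvd (1 - s) - (1 - t)" "n dvd (-s) - (-t)" "n dvd (1+s) - (1+t)"
    using h by (metis dvd_minus_iff minus_diff_eq diff_diff_eq2 add_diff_cancel_left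
       diff_minus_eq_add uminus_add_conv_diff)+
  then show ?thesis using h by (simp add: nn_def imat_cong_dvd)
qed

lemma dvd_neg_shift: "(q::int) dvd x - r \<Longrightarrow> q dvd (-x) - (-r)"
proof -
  assume "q dvd x - r" then have "q dvd -(x - r)" by (simp only: dvd_minus_iff)
  then show ?thesis by (simp add: algebra_simps)
qed

lemma e12_0[simp]: "e12 0 = imat_id" and e21_0[simp]: "e21 0 = imat_id" and nn_0[simp]: "nn 0 = imat_id"
  by (simp_all add: e12_def e21_def nn_def imat_id_def)

lemma split_mod:
  fixes n b :: int
  shows "0 < n \<Longrightarrow> \<exists>q m. 0<q \<and> 0<m \<and> n = q*m \<and> coprime q m \<and> coprime m b \<and> (\<forall>d. coprime d b \<longrightarrow> coprime d q)"
proof (induction "nat n" arbitrary: n rule: less_induct)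
  case less
  show ?case
  proof (cases "coprime n b")
    case True
    then show ?thesis using less.prems by (intro exI[of _ 1] exI[of _ n]) auto
  next
    case False
    define g where "g = gcd n b"
    have g1: "g > 1" using False less.prems unfolding g_def
      by (metis gcd_pos_int coprime_iff_gcd_eq_1 less_linear zero_less_one int_one_le_iff_zero_less
          order_le_less gcd_eq_0_iff less_irrefl)
    obtain n' where n': "n = g * n'" unfolding g_def by (meson gcd_dvd1 dvdE)
    have n'pos: "0 < n'" using n' g1 less.prems by (simp add: zero_less_mult_iff)
    have "n' < n" using n' g1 n'pos by (simp add: mult_less_cancel_right1 )
    then have "nat n' < nat n" using n'pos by simp
    then obtain q m where qm: "0<q" "0<m" "n' = q*m" "coprime q m" "coprime m b"
        "\<forall>d. coprime d b \<longrightarrow> coprime d q"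
      using less.hyps n'pos by blast
    have gb: "g dvd b" unfolding g_def by simp
    have "coprime g m" using qm(5) gb by (meson coprime_commute coprime_divisors dvd_refl)
    then have c1: "coprime (g*q) m" using qm(4) by simp
    have c2: "\<forall>d. coprime d b \<longrightarrow> coprime d (g*q)"
      using qm(6) gb by (meson coprime_divisors coprime_mult_right_iff dvd_refl)
    show ?thesis
      by (intro exI[of _ "g*q"] exI[of _ m]) (use qm c1 c2 n' g1 in \<open>auto simp: algebra_simps\<close>)
  qed
qed

lemma solve_mod:
  fixes x q r :: int
  assumes "coprime x q" "0 < q"
  shows "\<exists>t\<ge>0. q dvd x*t - r"
proof -
  obtain y where y: "[x*y = 1] (mod q)" using cong_solve_coprime_int assms by blast
  define t where "t = (y*r) mod q"
  have "[x*t = x*(y*r)] (mod q)" unfolding t_def by (simp add: cong_def mod_mult_right_eq)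
  moreover have "[x*(y*r) = 1*r] (mod q)" using y
    by (metis cong_scalar_right mult.assoc)
  ultimately have "[x*t = r] (mod q)" by (simp add: cong_trans)
  then have "q dvd x*t - r" by (simp add: cong_iff_dvd_diff)
  moreover have "t \<ge> 0" unfolding t_def using assms by simp
  ultimately show ?thesis by blast
qed


inductive_set elem :: "imat2 set" where
  elem_id: "imat_id \<in> elem"
| elem_12: "M \<in> elem \<Longrightarrow> imat_mult (e12 t) M \<in> elem"
| elem_21: "M \<in> elem \<Longrightarrow> imat_mult (e21 t) M \<in> elem"

lemma elem_mult: "P \<in> elem \<Longrightarrow> R \<in> elem \<Longrightarrow> imat_mult P R \<in> elem"
  by (induction P rule: elem.induct) (auto simp: imat_mult_assoc intro: elem.intros)

lemma e12_elem: "e12 t \<in> elem" using elem_12[OF elem_id, of t] by simp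
lemma e21_elem: "e21 t \<in> elem" using elem_21[OF elem_id, of t] by simp

lemma det_mult: "imat_det (imat_mult P R) = imat_det P * imat_det R"
  by (cases P; cases R) (simp add: imat_det_def imat_mult_def algebra_simps)

lemma elem_det: "P \<in> elem \<Longrightarrow> imat_det P = 1"
  by (induction P rule: elem.induct) (auto simp: det_mult imat_det_def imat_id_def e12_def e21_def imat_mult_def algebra_simps)

lemma euclid:
  "\<exists>P Q g h k. P \<in> elem \<and> Q \<in> elem \<and> imat_mult Q P = imat_id \<and> imat_mult P (a0,b0,c0,d0) = (g,h,0,k)"
proof (induction "nat \<bar>c0\<bar>" arbitrary: a0 b0 c0 d0 rule: less_induct)
  case less
  show ?case
  proof (cases "c0 = 0")
    case True
    then show ?thesis using elem_id by (intro exI[of _ imat_id]) auto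
  next
    case False
    define qq where "qq = a0 div c0"
    define r where "r = a0 mod c0"
    have ar: "a0 - qq * c0 = r" unfolding qq_def r_def by (metis minus_mult_div_eq_mod mult.commute)
    have "\<bar>r\<bar> < \<bar>c0\<bar>" unfolding r_def using False by (rule abs_mod_less)
    then have "nat \<bar>-r\<bar> < nat \<bar>c0\<bar>" by simp
    then obtain P' Q' g h k where IH: "P' \<in> elem" "Q' \<in> elem" "imat_mult Q' P' = imat_id"
       "imat_mult P' (c0, d0, -r, -(b0 - qq*d0)) = (g,h,0,k)"
      using less.hyps by blast
    define w1 where "w1 = imat_mult (e12 1) (imat_mult (e21 (-1)) (e12 1))"
    define w1i where "w1i = imat_mult (e12 (-1)) (imat_mult (e21 1) (e12 (-1)))"
    have w1: "w1 = (0,1,-1,0)" unfolding w1_def by (simp add: e12_def e21_def imat_mult_def)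
    have w1i: "imat_mult w1i w1 = imat_id" unfolding w1i_def w1
      by (simp add: e12_def e21_def imat_mult_def imat_id_def)
    have w1e: "w1 \<in> elem" "w1i \<in> elem" unfolding w1_def w1i_def
      by (auto intro!: elem_mult e12_elem e21_elem)
    define P where "P = imat_mult P' (imat_mult w1 (e12 (-qq)))"
    define Q where "Q = imat_mult (e12 qq) (imat_mult w1i Q')"
    have "P \<in> elem" "Q \<in> elem" unfolding P_def Q_def using IH w1e
      by (auto intro!: elem_mult e12_elem)
    moreover have "imat_mult Q P = imat_id"
    proof -
      have "imat_mult Q P = imat_mult (e12 qq) (imat_mult (imat_mult w1i (imat_mult (imat_mult Q' P') w1)) (e12 (-qq)))"
        unfolding P_def Q_def by (simp add: imat_mult_assoc)
      also have "\<dots> = imat_id" using IH(3) w1i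
        by (simp add: e12_def imat_mult_def imat_id_def)
      finally show ?thesis .
    qed
    moreover have "imat_mult P (a0,b0,c0,d0) = (g,h,0,k)"
    proof -
      have "imat_mult w1 (imat_mult (e12 (-qq)) (a0,b0,c0,d0)) = (c0, d0, -r, -(b0 - qq*d0))"
        using ar unfolding w1 by (simp add: e12_def imat_mult_def algebra_simps)
      then show ?thesis unfolding P_def using IH(4) by (simp add: imat_mult_assoc)
    qed
    ultimately show ?thesis by blast
  qed
qed

locale gam =
  fixes \<Gamma> :: "imat2 set" and a b c :: int
  assumes closed: "\<And>P R. P \<in> \<Gamma> \<Longrightarrow> R \<in> \<Gamma> \<Longrightarrow> imat_mult P R \<in> \<Gamma>"
    and idG: "imat_id \<in> \<Gamma>"
    and Upow: "\<And>k::nat. e12 (b * int k) \<in> \<Gamma>"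
    and Vpow: "\<And>k::nat. e21 (- a * int k) \<in> \<Gamma>"
    and Wpow: "\<And>k::nat. nn (c * int k) \<in> \<Gamma>"
    and pos: "0 < a" "0 < b" "0 < c"
    and cop: "coprime a b" "coprime b c" "coprime a c"
begin

lemma Upow': "t \<ge> 0 \<Longrightarrow> e12 (b * t) \<in> \<Gamma>" using Upow[of "nat t"] by simp
lemma Vpow': "t \<ge> 0 \<Longrightarrow> e21 (- a * t) \<in> \<Gamma>" using Vpow[of "nat t"] by simp
lemma Wpow': "t \<ge> 0 \<Longrightarrow> nn (c * t) \<in> \<Gamma>" using Wpow[of "nat t"] by simp

lemma get_e12: assumes "0 < n" shows "\<exists>N\<in>\<Gamma>. imat_cong N (e12 1) n"
proof -
  obtain q m where qm: "0<q" "0<m" "n = q*m" "coprime q m" "coprime m b"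
        "\<forall>d. coprime d b \<longrightarrow> coprime d q"
    using split_mod[OF assms, of b] by blast
  have caq: "coprime (a*m) q" using qm cop by (simp add: coprime_commute)
  have ccq: "coprime (c*m) q" using qm cop by (simp add: coprime_commute)
  obtain k where k: "k \<ge> 0" "m dvd b*k - 1" using solve_mod[of b m 1] qm cop
    by (auto simp: coprime_commute)
  define s where "s = 1 - b*k"
  obtain t1 where t1: "t1 \<ge> 0" "q dvd (a*m)*t1 - 1" using solve_mod[OF caq] qm by blast
  obtain t2 where t2: "t2 \<ge> 0" "q dvd (a*m)*t2 - (-1)" using solve_mod[OF caq] qm by blast
  obtain t3 where t3: "t3 \<ge> 0" "q dvd (c*m)*t3 - s" using solve_mod[OF ccq] qm by blast
  define H1 where "H1 = e21 (- a * (m*t1))"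
  define H2 where "H2 = nn (c * (m*t3))"
  define H3 where "H3 = e21 (- a * (m*t2))"
  define N1 where "N1 = e12 (b*k)"
  define N where "N = imat_mult H1 (imat_mult H2 (imat_mult H3 N1))"
  have "N \<in> \<Gamma>" unfolding N_def H1_def H2_def H3_def N1_def
    using Upow' Vpow' Wpow' closed k t1 t2 t3 qm by simp
  moreover have "imat_cong N (e12 1) q"
  proof -
    have "imat_cong H1 (e21 (-1)) q" unfolding H1_def
      by (rule cong_e21) (use dvd_neg_shift[OF t1(2)] in \<open>simp add: mult.assoc\<close>)
    moreover have "imat_cong H2 (nn s) q" unfolding H2_def
      by (rule cong_nn) (use t3 in \<open>simp add: mult.assoc\<close>)
    moreover have "imat_cong H3 (e21 1) q" unfolding H3_def
      by (rule cong_e21) (use dvd_neg_shift[OF t2(2)] in \<open>simp add: mult.assoc\<close>)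
    ultimately have "imat_cong N (imat_mult (e21 (-1)) (imat_mult (nn s) (imat_mult (e21 1) N1))) q"
      unfolding N_def by (intro imat_cong_mult imat_cong_refl)
    moreover have "imat_mult (e21 (-1)) (imat_mult (nn s) (imat_mult (e21 1) N1)) = e12 1"
      unfolding N1_def s_def by (simp add: e12_def e21_def nn_def imat_mult_def algebra_simps)
    ultimately show ?thesis by simp
  qed
  moreover have "imat_cong N (e12 1) m"
  proof -
    have "imat_cong H1 imat_id m" "imat_cong H2 imat_id m" "imat_cong H3 imat_id m"
      unfolding H1_def H2_def H3_def
      using cong_e21[of m "- a * (m*t1)" 0] cong_nn[of m "c * (m*t3)" 0] cong_e21[of m "- a * (m*t2)" 0]
      by simp_all
    then have "imat_cong N (imat_mult imat_id (imat_mult imat_id (imat_mult imat_id N1))) m"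
      unfolding N_def by (intro imat_cong_mult imat_cong_refl)
    moreover have "imat_cong N1 (e12 1) m" unfolding N1_def using k by (intro cong_e12) simp
    ultimately show ?thesis by (auto intro: imat_cong_trans)
  qed
  ultimately show ?thesis using imat_cong_crt qm by blast
qed

lemma get_e21: assumes "0 < n" shows "\<exists>N\<in>\<Gamma>. imat_cong N (e21 1) n"
proof -
  obtain q m where qm: "0<q" "0<m" "n = q*m" "coprime q m" "coprime m a"
        "\<forall>d. coprime d a \<longrightarrow> coprime d q"
    using split_mod[OF assms, of a] by blast
  have cbq: "coprime (b*m) q" using qm cop by (simp add: coprime_commute)
  have ccq: "coprime (c*m) q" using qm cop by (simp add: coprime_commute)
  obtain k where k: "k \<ge> 0" "m dvd a*k - (-1)" using solve_mod[of a m "-1"] qm cop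
    by (auto simp: coprime_commute)
  define s where "s = 1 + a*k"
  obtain t1 where t1: "t1 \<ge> 0" "q dvd (b*m)*t1 - (-1)" using solve_mod[OF cbq] qm by blast
  obtain t2 where t2: "t2 \<ge> 0" "q dvd (b*m)*t2 - 1" using solve_mod[OF cbq] qm by blast
  obtain t3 where t3: "t3 \<ge> 0" "q dvd (c*m)*t3 - (-s)" using solve_mod[OF ccq] qm by blast
  define H1 where "H1 = e12 (b * (m*t1))"
  define H2 where "H2 = nn (c * (m*t3))"
  define H3 where "H3 = e12 (b * (m*t2))"
  define N1 where "N1 = e21 (-a*k)"
  define N where "N = imat_mult H1 (imat_mult H2 (imat_mult H3 N1))"
  have "N \<in> \<Gamma>" unfolding N_def H1_def H2_def H3_def N1_def
    using Upow' Vpow' Wpow' closed k t1 t2 t3 qm by simp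
  moreover have "imat_cong N (e21 1) q"
  proof -
    have "imat_cong H1 (e12 (-1)) q" unfolding H1_def
      by (rule cong_e12) (use t1 in \<open>simp add: mult.assoc\<close>)
    moreover have "imat_cong H2 (nn (-s)) q" unfolding H2_def
      by (rule cong_nn) (use t3 in \<open>simp add: mult.assoc\<close>)
    moreover have "imat_cong H3 (e12 1) q" unfolding H3_def
      by (rule cong_e12) (use t2 in \<open>simp add: mult.assoc\<close>)
    ultimately have "imat_cong N (imat_mult (e12 (-1)) (imat_mult (nn (-s)) (imat_mult (e12 1) N1))) q"
      unfolding N_def by (intro imat_cong_mult imat_cong_refl)
    moreover have "imat_mult (e12 (-1)) (imat_mult (nn (-s)) (imat_mult (e12 1) N1)) = e21 1"
      unfolding N1_def s_def by (simp add: e12_def e21_def nn_def imat_mult_def algebra_simps)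
    ultimately show ?thesis by simp
  qed
  moreover have "imat_cong N (e21 1) m"
  proof -
    have "imat_cong H1 imat_id m" "imat_cong H2 imat_id m" "imat_cong H3 imat_id m"
      unfolding H1_def H2_def H3_def
      using cong_e12[of m "b * (m*t1)" 0] cong_nn[of m "c * (m*t3)" 0] cong_e12[of m "b * (m*t2)" 0]
      by simp_all
    then have "imat_cong N (imat_mult imat_id (imat_mult imat_id (imat_mult imat_id N1))) m"
      unfolding N_def by (intro imat_cong_mult imat_cong_refl)
    moreover have "imat_cong N1 (e21 1) m" unfolding N1_def using k
      by (intro cong_e21) (use dvd_neg_shift[OF k(2)] in simp)
    ultimately show ?thesis by (auto intro: imat_cong_trans)
  qed
  ultimately show ?thesis using imat_cong_crt qm by blast
qed

definition RR :: "int \<Rightarrow> imat2 \<Rightarrow> bool" where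
  "RR n Xm \<longleftrightarrow> (\<exists>N\<in>\<Gamma>. imat_cong N Xm n)"

lemma RR_mult: "RR n Xm \<Longrightarrow> RR n Ym \<Longrightarrow> RR n (imat_mult Xm Ym)"
  unfolding RR_def using closed imat_cong_mult by blast

lemma RR_cong: "RR n Xm \<Longrightarrow> imat_cong Xm Ym n \<Longrightarrow> RR n Ym"
  unfolding RR_def using imat_cong_trans by blast

lemma RR_id: "RR n imat_id"
  unfolding RR_def using idG imat_cong_refl by blast

lemma RR_e12: assumes "0 < n" shows "RR n (e12 t)"
proof -
  have e1: "RR n (e12 1)" using get_e12[OF assms] unfolding RR_def .
  have k: "RR n (e12 (int k))" for k
  proof (induction k)
    case 0 then show ?case using RR_id by simp
  next
    case (Suc k)
    have "e12 (int (Suc k)) = imat_mult (e12 1) (e12 (int k))"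
      by (simp add: e12_def imat_mult_def)
    then show ?case using RR_mult[OF e1 Suc] by simp
  qed
  have "RR n (e12 (int (nat (t mod n))))" by (rule k)
  moreover have "int (nat (t mod n)) = t mod n" using assms by simp
  moreover have "n dvd t mod n - t" by (simp add: mod_eq_dvd_iff[symmetric])
  ultimately show ?thesis using RR_cong cong_e12 by metis
qed

lemma RR_e21: assumes "0 < n" shows "RR n (e21 t)"
proof -
  have e1: "RR n (e21 1)" using get_e21[OF assms] unfolding RR_def .
  have k: "RR n (e21 (int k))" for k
  proof (induction k)
    case 0 then show ?case using RR_id by simp
  next
    case (Suc k)
    have "e21 (int (Suc k)) = imat_mult (e21 1) (e21 (int k))"
      by (simp add: e21_def imat_mult_def)
    then show ?case using RR_mult[OF e1 Suc] by simp
  qed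
  have "RR n (e21 (int (nat (t mod n))))" by (rule k)
  moreover have "int (nat (t mod n)) = t mod n" using assms by simp
  moreover have "n dvd t mod n - t" by (simp add: mod_eq_dvd_iff[symmetric])
  ultimately show ?thesis using RR_cong cong_e21 by metis
qed

lemma RR_elem: "P \<in> elem \<Longrightarrow> 0 < n \<Longrightarrow> RR n P"
  by (induction P rule: elem.induct) (auto intro: RR_id RR_mult RR_e12 RR_e21)

lemma surj_mod:
  assumes "0 < n" "imat_det Xm mod n = 1 mod n"
  shows "\<exists>N\<in>\<Gamma>. imat_cong N Xm n"
proof -
  obtain a0 b0 c0 d0 where Xm: "Xm = (a0,b0,c0,d0)" by (cases Xm) auto
  obtain P Q g h k where PQ: "P \<in> elem" "Q \<in> elem" "imat_mult Q P = imat_id"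
      "imat_mult P Xm = (g,h,0,k)"
    using euclid Xm by blast
  have "imat_det (g,h,0,k) = imat_det Xm" using PQ(4)[symmetric] elem_det[OF PQ(1)] by (simp add: det_mult)
  then have "n dvd 1 - g*k" using assms(2) by (simp add: imat_det_def mod_eq_dvd_iff dvd_diff_commute)
  define e where "e = 1 - g*k"
  have ne: "n dvd e" unfolding e_def by fact
  define D where "D = imat_mult (e12 g) (imat_mult (e21 (-k)) (imat_mult (e12 g)
       (imat_mult (e12 (-1)) (imat_mult (e21 1) (imat_mult (e12 (-1)) (e12 (k*h)))))))"
  have De: "D \<in> elem" unfolding D_def by (auto intro!: elem_mult e12_elem e21_elem)
  have Dval: "D = (g + g*e, (1-e)*(1+e)*h - e, e, e*k*h + k)"
    unfolding D_def e_def by (simp add: e12_def e21_def imat_mult_def algebra_simps)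
  have "imat_cong D (g,h,0,k) n"
  proof -
    have "(1-e)*(1+e)*h - e - h = e * (- e*h - 1)" by (simp add: algebra_simps)
    then show ?thesis unfolding Dval imat_cong_dvd using ne by (auto simp: algebra_simps)
  qed
  then have "imat_cong (imat_mult Q D) (imat_mult Q (g,h,0,k)) n"
    by (intro imat_cong_mult imat_cong_refl)
  moreover have "imat_mult Q (g,h,0,k) = Xm"
    using PQ by (metis imat_mult_assoc imat_mult_id(1))
  moreover have "RR n (imat_mult Q D)" using RR_elem[OF elem_mult[OF PQ(2) De] assms(1)] by blast
  ultimately show ?thesis using RR_cong unfolding RR_def by metis
qed

end

lemma word_act_append: "word_act G (w1 @ w2) p = word_act G w1 (word_act G w2 p)"
  by (induction w1) auto

lemma word_mat_append: "word_mat (w1 @ w2) = imat_mult (word_mat w1) (word_mat w2)"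
  by (induction w1) (auto simp: imat_mult_assoc)

lemma act_T_pow:
  assumes "group G" "p \<in> carrier G" "q \<in> carrier G"
  shows "word_act G (replicate k GT) (p, q) = (p, q \<otimes>\<^bsub>G\<^esub> (inv\<^bsub>G\<^esub> p) [^]\<^bsub>G\<^esub> k)"
proof (induction k)
  case 0 interpret group G by fact
  show ?case using assms by simp
next
  case (Suc k)
  interpret group G by fact
  show ?case using Suc assms by (simp add: gen_act_def m_assoc)
qed

definition wA :: "gen list" where "wA = [GS, GT, GSinv]"
definition wAi :: "gen list" where "wAi = [GS, GTinv, GSinv]"

lemma act_A:
  assumes "group G" "p \<in> carrier G" "q \<in> carrier G"
  shows "word_act G wA (p, q) = (q \<otimes>\<^bsub>G\<^esub> p, q)"
proof -
  interpret group G by fact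
  show ?thesis using assms by (simp add: wA_def gen_act_def inv_mult_group)
qed

lemma act_Ai:
  assumes "group G" "p \<in> carrier G" "q \<in> carrier G"
  shows "word_act G wAi (p, q) = (inv\<^bsub>G\<^esub> q \<otimes>\<^bsub>G\<^esub> p, q)"
proof -
  interpret group G by fact
  show ?thesis using assms by (simp add: wAi_def gen_act_def inv_mult_group)
qed

lemma act_A_pow:
  fixes G (structure)
  assumes "group G" "p \<in> carrier G" "q \<in> carrier G"
  shows "word_act G (concat (replicate k wA)) (p, q) = (q [^]\<^bsub>G\<^esub> k \<otimes>\<^bsub>G\<^esub> p, q)"
proof (induction k)
  case 0 interpret group G by fact
  show ?case using assms by simp
next
  case (Suc k)
  interpret group G by fact
  have e: "q [^] Suc k = q \<otimes> q [^] k" by (rule nat_pow_Suc2[OF assms(3)])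
  have "q \<otimes> (q [^] k \<otimes> p) = q [^] Suc k \<otimes> p"
    unfolding e using assms by (simp add: m_assoc)
  then show ?case using Suc assms by (simp add: word_act_append act_A)
qed

lemma mat_T_pow: "word_mat (replicate k GT) = (1, int k, 0, 1)"
  by (induction k) (auto simp: imat_id_def imat_mult_def gen_mat_def)

lemma mat_A_pow: "word_mat (concat (replicate k wA)) = (1, 0, - int k, 1)"
  by (induction k) (auto simp: imat_id_def imat_mult_def gen_mat_def word_mat_append wA_def)

lemma mat_W: "word_mat (wAi @ replicate k GT @ wA) = (1 - int k, int k, - int k, 1 + int k)"
  by (simp add: word_mat_append mat_T_pow) (simp add: wA_def wAi_def imat_id_def imat_mult_def gen_mat_def algebra_simps)


lemma pow_mult_one:
  fixes G (structure)
  assumes "group G" "z \<in> carrier G"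
  shows "z [^]\<^bsub>G\<^esub> (group.ord G z * k) = \<one>\<^bsub>G\<^esub>"
proof -
  interpret group G by fact
  have "(z [^] ord z) [^] k = z [^] (ord z * k)" by (rule nat_pow_pow[OF assms(2)])
  then show ?thesis using assms by simp
qed

theorem mainTheorem4:
  fixes G (structure) and x y :: 'a and a b c :: nat
  assumes "group G"
    and "finite (carrier G)"
    and "x \<in> carrier G" and "y \<in> carrier G"
    and "generate G {x, y} = carrier G"
    and "a > 0" and "b > 0" and "c > 0"
    and "coprime a b" and "coprime b c" and "coprime a c"
    and "group.ord G x = a" and "group.ord G y = b" and "group.ord G (x \<otimes> y) = c"
  shows "totally_noncongruence (veech_group G y x)"
proof -
  interpret group G by fact
  have xy: "x \<otimes> y \<in> carrier G" using assms by simp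
  define \<Gamma>0 where "\<Gamma>0 = {word_mat w | w. word_act G w (y, x) = (y, x)}"
  have sub: "\<Gamma>0 \<subseteq> veech_group G y x"
    proof
    fix P assume "P \<in> \<Gamma>0"
    then obtain w where "P = word_mat w" "word_act G w (y, x) = (y, x)" unfolding \<Gamma>0_def by blast
    moreover have "origami_equiv G (y, x) (y, x)" unfolding origami_equiv_def
      using iso_set_refl by force
    ultimately show "P \<in> veech_group G y x" unfolding veech_group_def by auto
  qed
  have g: "gam \<Gamma>0 (int a) (int b) (int c)"
  proof
    fix P R assume "P \<in> \<Gamma>0" "R \<in> \<Gamma>0"
    then obtain w1 w2 where "P = word_mat w1" "word_act G w1 (y, x) = (y, x)"
      "R = word_mat w2" "word_act G w2 (y, x) = (y, x)" unfolding \<Gamma>0_def by blast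
    then show "imat_mult P R \<in> \<Gamma>0" unfolding \<Gamma>0_def
      by (intro CollectI exI[of _ "w1 @ w2"]) (simp add: word_mat_append word_act_append)
  next
    show "imat_id \<in> \<Gamma>0" unfolding \<Gamma>0_def by (intro CollectI exI[of _ "[]"]) simp
  next
    fix k :: nat
    have "inv y [^] (b*k) = \<one>" using pow_mult_one[OF assms(1,4), of k] assms
      by (simp add: nat_pow_inv)
    then have "word_act G (replicate (b*k) GT) (y, x) = (y, x)"
      using act_T_pow[OF assms(1,4,3)] assms by simp
    moreover have "word_mat (replicate (b*k) GT) = e12 (int b * int k)"
      by (simp add: mat_T_pow e12_def)
    ultimately show "e12 (int b * int k) \<in> \<Gamma>0" unfolding \<Gamma>0_def by (intro CollectI exI[of _ "replicate (b*k) GT"]) simp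
  next
    fix k :: nat
    have "x [^] (a*k) = \<one>" using pow_mult_one[OF assms(1,3), of k] assms by simp
    then have "word_act G (concat (replicate (a*k) wA)) (y, x) = (y, x)"
      using act_A_pow[OF assms(1,4,3)] assms by simp
    moreover have "word_mat (concat (replicate (a*k) wA)) = e21 (- int a * int k)"
      by (simp add: mat_A_pow e21_def)
    ultimately show "e21 (- int a * int k) \<in> \<Gamma>0" unfolding \<Gamma>0_def by (intro CollectI exI[of _ "concat (replicate (a*k) wA)"]) simp
  next
    fix k :: nat
    have "inv (x \<otimes> y) [^] (c*k) = \<one>" using pow_mult_one[OF assms(1) xy, of k] assms xy
      by (simp add: nat_pow_inv)
    then have "word_act G (replicate (c*k) GT) (x \<otimes> y, x) = (x \<otimes> y, x)"
      using act_T_pow[OF assms(1) xy assms(3)] assms by simp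
    then have "word_act G (wAi @ replicate (c*k) GT @ wA) (y, x) = (y, x)"
      using assms xy by (simp add: word_act_append act_A act_Ai m_assoc[symmetric])
    moreover have "word_mat (wAi @ replicate (c*k) GT @ wA) = nn (int c * int k)"
      by (simp add: mat_W nn_def)
    ultimately show "nn (int c * int k) \<in> \<Gamma>0" unfolding \<Gamma>0_def by (intro CollectI exI[of _ "wAi @ replicate (c*k) GT @ wA"]) simp
  qed (use assms in auto)
  show ?thesis unfolding totally_noncongruence_def
  proof (intro allI impI)
    fix n :: int and M assume "1 \<le> n" "imat_det M mod n = 1 mod n"
    then obtain N where "N \<in> \<Gamma>0" "imat_cong N M n" using gam.surj_mod[OF g, of n M] by auto
    then show "\<exists>N\<in>veech_group G y x. imat_cong N M n" using sub by blast
  qed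
qed

end
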